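(* Let $\bar Y_n$ be the out-degree of a node chosen uniformly at random from the inserted nodes $\{1,\dots,n\}$ of a random ordered increasing $k$-tree of size $n\ge1$. Then for $m\ge0$, \[ \mathbb{P}\{\bar Y_n=m\}=\frac{1}{n\binom{n-\frac{k}{k+1}}{n}}\sum_{\ell=0}^{m}\frac{\binom{m}{\ell}(-1)^{\ell}}{k(\ell+2)+1}\left(\binom{n+\frac{1}{k+1}}{n}-\binom{n-\frac{k(\ell+2)}{k+1}}{n}\right). \] As $n\to\infty$, $\bar Y_n$ converges in distribution to a discrete random variable $\bar Y$ with \[ \mathbb{P}\{\bar Y=m\}=p_m:=\frac{k+1}{k(m+1)\binom{m+2+\frac1k}{m+1}},\quad m\ge0, \] and $p_m\sim\frac{k+1}{k}\Gamma(2+\frac1k)\,m^{-2-\frac1k}$ as $m\to\infty$.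
   Context: Fix an integer $k\ge1$. An ordered increasing $k$-tree of size $n\ge0$ is built as follows. Start with the root-clique $K_0$: $k$ pairwise adjacent vertices labelled $0_1,\dots,0_k$ (the root nodes; each label $0_\ell$ has value $0$). For $j=1,\dots,n$ in turn, node $j$ is inserted by choosing a currently existing $k$-clique $K$ and attaching $j$ to it, i.e. adding edges from $j$ to all $k$ vertices of $K$; $j$ is then a child of $K$ and the vertices of $K$ are the parents of $j$. The $k$-cliques available for attachment are the root-clique and, for every previously inserted node $x$ attached to a clique $K'$, the $k$ cliques $\{x\}\cup(K'\setminus\{w\})$, $w\in K'$. The children of each $k$-clique are linearly ordered: if $K$ currently has $d^+(K)$ children, there are $d^+(K)+1$ positions at which the new child may be placed, and the choice of position is part of the structure. Thus there are $1+(k+1)(j-1)$ ways to insert node $j$, and distinct sequences of choices give distinct trees. A random ordered increasing $k$-tree of size $n$ is one chosen uniformly among all of them; equivalently, it is produced by the process in which node $n$ is attached to the clique $K$ with probability $\frac{d^+(K)+1}{1+(k+1)(n-1)}$ (and a uniformly random position among the $d^+(K)+1$). The out-degree of a node $u$ is the number of nodes having $u$ as a parent (for a root node this is its number of non-root neighbours). For real $x$ and integer $m\ge0$, $\binom{x}{m}=x(x-1)\cdots(x-m+1)/m!$, and $\binom{x}{m}=0$ for $m<0$. *)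

theory Defs
  imports "HOL-Probability.Probability"
begin

text \<open>Vertices: root nodes Root i (i < k) standing for 0_(i+1), and inserted nodes Node j (j \<ge> 1).\<close>
datatype vtx = Root nat | Node nat

definition root_clique :: "nat \<Rightarrow> vtx set" where
  "root_clique k = Root ` {..<k}"

text \<open>A tree is described by its list of insertion choices: entry i (0-based) is the pair
  (K, p) where K is the clique to which node i+1 is attached and p \<in> {0..d+(K)} the chosen
  position among the children of K.\<close>
definition avail :: "nat \<Rightarrow> vtx set list \<Rightarrow> vtx set set" where
  "avail k Ks = insert (root_clique k)
     (\<Union>i<length Ks. (\<lambda>w. insert (Node (Suc i)) (Ks ! i - {w})) ` (Ks ! i))"

definition nchildren :: "vtx set list \<Rightarrow> vtx set \<Rightarrow> nat" where
  "nchildren Ks K = length (filter (\<lambda>K'. K' = K) Ks)"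

fun trees :: "nat \<Rightarrow> nat \<Rightarrow> (vtx set \<times> nat) list set" where
  "trees k 0 = {[]}"
| "trees k (Suc n) = {t @ [(K, p)] | t K p. t \<in> trees k n \<and> K \<in> avail k (map fst t)
                         \<and> p \<le> nchildren (map fst t) K}"

text \<open>Out-degree of inserted node u: number of nodes having u as a parent.\<close>
definition outdeg :: "(vtx set \<times> nat) list \<Rightarrow> nat \<Rightarrow> nat" where
  "outdeg t u = card {j. j < length t \<and> Node u \<in> fst (t ! j)}"

definition Ybar_prob :: "nat \<Rightarrow> nat \<Rightarrow> nat \<Rightarrow> real" where
  "Ybar_prob k n m = measure_pmf.prob (pmf_of_set (trees k n \<times> {1..n}))
                        {x. outdeg (fst x) (snd x) = m}"

definition p_lim :: "nat \<Rightarrow> nat \<Rightarrow> real" where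
  "p_lim k m = (real k + 1) /
     (real k * real (m + 1) * ((real m + 2 + 1 / real k) gchoose (m + 1)))"

end

theory Submission imports Defs begin

fun lvl :: "vtx \<Rightarrow> nat" where "lvl (Root _) = 0" | "lvl (Node j) = j"

definition good :: "nat \<Rightarrow> vtx set list \<Rightarrow> bool" where
  "good k Ks = (\<forall>i<length Ks. Ks ! i \<in> avail k (take i Ks))"

definition cl_ok :: "nat \<Rightarrow> nat \<Rightarrow> vtx set \<Rightarrow> bool" where
  "cl_ok k n K = (finite K \<and> card K = k \<and> (\<forall>v\<in>K. lvl v \<le> n))"

lemma root_ok: "cl_ok k 0 (root_clique k)"
  unfolding cl_ok_def root_clique_def
  by (auto simp: card_image inj_on_def)

lemma gen_ok:
  assumes "cl_ok k i K" "w \<in> K"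
  shows "cl_ok k (Suc i) (insert (Node (Suc i)) (K - {w}))"
proof -
  have nin: "Node (Suc i) \<notin> K" using assms unfolding cl_ok_def by fastforce
  have "card K \<ge> 1" using assms unfolding cl_ok_def
    by (metis One_nat_def Suc_leI card_gt_0_iff empty_iff)
  then show ?thesis using assms nin unfolding cl_ok_def
    by (auto simp: card_insert_if)
qed

lemma cl_ok_mono: "cl_ok k i K \<Longrightarrow> i \<le> j \<Longrightarrow> cl_ok k j K"
  unfolding cl_ok_def by auto

lemma avail_ok:
  assumes "\<forall>i<length Ks. cl_ok k i (Ks ! i)" "K \<in> avail k Ks"
  shows "cl_ok k (length Ks) K"
  using assms unfolding avail_def
  apply auto
   apply (rule cl_ok_mono[OF root_ok], simp)
  apply (rule cl_ok_mono[OF gen_ok], auto)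
  done

lemma good_take: "good k Ks \<Longrightarrow> good k (take i Ks)"
  unfolding good_def by (auto simp: min_def)

lemma good_ok: "good k Ks \<Longrightarrow> i < length Ks \<Longrightarrow> cl_ok k i (Ks ! i)"
proof (induction i arbitrary: Ks rule: less_induct)
  case (less i)
  have "\<forall>j<length (take i Ks). cl_ok k j (take i Ks ! j)"
    using less by (auto intro: less.IH good_take)
  moreover have "Ks ! i \<in> avail k (take i Ks)" using less unfolding good_def by auto
  ultimately show ?case using avail_ok less.prems by fastforce
qed

lemma good_avail_ok: "good k Ks \<Longrightarrow> K \<in> avail k Ks \<Longrightarrow> cl_ok k (length Ks) K"
  using avail_ok good_ok by blast

lemma avail_take_sub: "avail k (take j Ks) \<subseteq> avail k Ks"
  unfolding avail_def by auto

lemma set_sub_avail: "good k Ks \<Longrightarrow> set Ks \<subseteq> avail k Ks"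
proof
  fix K assume "good k Ks" "K \<in> set Ks"
  then obtain i where "i < length Ks" "K = Ks ! i" by (auto simp: in_set_conv_nth)
  then show "K \<in> avail k Ks" using \<open>good k Ks\<close> avail_take_sub[of k i Ks]
    unfolding good_def by auto
qed

lemma trees_props: "t \<in> trees k n \<Longrightarrow> length t = n \<and> good k (map fst t)"
proof (induction n arbitrary: t)
  case 0 then show ?case by (simp add: good_def)
next
  case (Suc n)
  then obtain t0 K p where t: "t = t0 @ [(K,p)]" "t0 \<in> trees k n" "K \<in> avail k (map fst t0)" by auto
  with Suc.IH[of t0] show ?case
    by (auto simp: good_def nth_append less_Suc_eq)
qed

definition gen :: "vtx set list \<Rightarrow> nat \<Rightarrow> vtx \<Rightarrow> vtx set" where
  "gen Ks i w = insert (Node (Suc i)) (Ks ! i - {w})"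

lemma avail_gen: "avail k Ks = insert (root_clique k) (\<Union>i<length Ks. gen Ks i ` (Ks ! i))"
  unfolding avail_def gen_def by simp

lemma gen_inj: "good k Ks \<Longrightarrow> i < length Ks \<Longrightarrow> inj_on (gen Ks i) (Ks ! i)"
proof (rule inj_onI)
  fix w w' assume g: "good k Ks" "i < length Ks" and w: "w \<in> Ks ! i" "w' \<in> Ks ! i"
    and e: "gen Ks i w = gen Ks i w'"
  have nin: "Node (Suc i) \<notin> Ks ! i" using good_ok[OF g] unfolding cl_ok_def by fastforce
  have "Ks ! i - {w} = Ks ! i - {w'}"
  proof -
    have "Ks ! i - {w} = gen Ks i w - {Node (Suc i)}" using nin unfolding gen_def by auto
    also have "\<dots> = gen Ks i w' - {Node (Suc i)}" using e by simp
    also have "\<dots> = Ks ! i - {w'}" using nin unfolding gen_def by auto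
    finally show ?thesis .
  qed
  then show "w = w'" using w by blast
qed

lemma gen_ok': "good k Ks \<Longrightarrow> i < length Ks \<Longrightarrow> w \<in> Ks ! i \<Longrightarrow> cl_ok k (Suc i) (gen Ks i w)"
  unfolding gen_def using gen_ok good_ok by blast

lemma avail_sum:
  assumes g: "good k Ks"
  shows "finite (avail k Ks) \<and> (\<Sum>K\<in>avail k Ks. f K) = f (root_clique k) +
     (\<Sum>i<length Ks. \<Sum>w\<in>Ks ! i. f (gen Ks i w))"
proof -
  have fin: "\<And>i. i < length Ks \<Longrightarrow> finite (Ks ! i)" using good_ok[OF g] unfolding cl_ok_def by blast
  have R: "root_clique k \<notin> (\<Union>i<length Ks. gen Ks i ` (Ks ! i))"
    unfolding root_clique_def gen_def by auto
  have disj: "\<forall>i\<in>{..<length Ks}. \<forall>j\<in>{..<length Ks}. i \<noteq> j \<longrightarrow>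
      gen Ks i ` (Ks ! i) \<inter> gen Ks j ` (Ks ! j) = {}"
  proof (intro ballI impI)
    fix i j assume ij: "i \<in> {..<length Ks}" "j \<in> {..<length Ks}" "i \<noteq> j"
    { fix a b assume ab: "a < length Ks" "b < length Ks" "a < b"
      have "gen Ks a ` (Ks ! a) \<inter> gen Ks b ` (Ks ! b) = {}"
      proof (rule ccontr)
        assume "\<not> ?thesis"
        then obtain K where K: "K \<in> gen Ks a ` (Ks ! a)" "K \<in> gen Ks b ` (Ks ! b)" by blast
        have "Node (Suc b) \<in> K" using K(2) unfolding gen_def by auto
        moreover have "cl_ok k (Suc a) K" using K(1) gen_ok'[OF g ab(1)] by auto
        ultimately show False using ab unfolding cl_ok_def by fastforce
      qed }
    then show "gen Ks i ` (Ks ! i) \<inter> gen Ks j ` (Ks ! j) = {}" using ij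
      by (metis Int_commute lessThan_iff linorder_neqE_nat)
  qed
  have finU: "finite (\<Union>i<length Ks. gen Ks i ` (Ks ! i))" using fin by auto
  have "(\<Sum>K\<in>avail k Ks. f K) = f (root_clique k) + (\<Sum>K\<in>(\<Union>i<length Ks. gen Ks i ` (Ks ! i)). f K)"
    unfolding avail_gen using R finU by simp
  also have "(\<Sum>K\<in>(\<Union>i<length Ks. gen Ks i ` (Ks ! i)). f K) =
      (\<Sum>i<length Ks. \<Sum>K\<in>gen Ks i ` (Ks ! i). f K)"
    by (rule sum.UNION_disjoint) (use fin disj in auto)
  also have "\<dots> = (\<Sum>i<length Ks. \<Sum>w\<in>Ks ! i. f (gen Ks i w))"
    by (rule sum.cong[OF refl], subst sum.reindex) (use gen_inj[OF g] in auto)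
  finally show ?thesis using finU unfolding avail_gen by simp
qed

lemma nch_sum:
  assumes "finite A" "set Ks \<subseteq> A"
  shows "(\<Sum>K\<in>A. real (nchildren Ks K) * g K) = (\<Sum>j<length Ks. g (Ks ! j))"
  using assms(2)
proof (induction Ks)
  case Nil then show ?case by (simp add: nchildren_def)
next
  case (Cons x Ks)
  have "(\<Sum>K\<in>A. real (nchildren (x # Ks) K) * g K) =
        (\<Sum>K\<in>A. (if K = x then g K else 0)) + (\<Sum>K\<in>A. real (nchildren Ks K) * g K)"
    by (simp add: nchildren_def sum.distrib[symmetric] algebra_simps) (intro sum.cong, auto simp: algebra_simps)
  also have "(\<Sum>K\<in>A. (if K = x then g K else 0)) = g x"
    using Cons.prems assms(1) by (simp add: sum.delta')
  moreover have "(\<Sum>j<length (x # Ks). g ((x # Ks) ! j)) = g x + (\<Sum>j<length Ks. g (Ks ! j))"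
    by (simp only: length_Cons sum.lessThan_Suc_shift) simp
  ultimately show ?case using Cons by simp
qed

lemma cnt_sum: "(\<Sum>j<length xs. if P (xs ! j) then c else 0) = c * real (length (filter P xs))"
proof (induction xs)
  case (Cons a xs)
  have "(\<Sum>j<length (a # xs). if P ((a # xs) ! j) then c else 0) =
        (if P a then c else 0) + (\<Sum>j<length xs. if P (xs ! j) then c else 0)"
    by (simp only: length_Cons sum.lessThan_Suc_shift) simp
  then show ?case using Cons by (simp add: algebra_simps)
qed simp

lemma gen_cnt:
  assumes g: "good k Ks" and i: "i < length Ks" and k: "k \<ge> 1"
  shows "(\<Sum>w\<in>Ks ! i. if Node u \<in> gen Ks i w then 1 else 0 :: real) =
    (if u = Suc i then real k else 0) + (if Node u \<in> Ks ! i then real k - 1 else 0)"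
proof -
  have ok: "cl_ok k i (Ks ! i)" using good_ok[OF g i] .
  then have fin: "finite (Ks ! i)" and c: "card (Ks ! i) = k" and nin: "Node (Suc i) \<notin> Ks ! i"
    unfolding cl_ok_def by fastforce+
  show ?thesis
  proof (cases "u = Suc i")
    case True
    then show ?thesis using nin c by (simp add: gen_def)
  next
    case False
    have "(\<Sum>w\<in>Ks ! i. if Node u \<in> gen Ks i w then 1 else 0 :: real) =
          (\<Sum>w\<in>Ks ! i. if Node u \<in> Ks ! i \<and> w \<noteq> Node u then 1 else 0)"
      using False by (intro sum.cong) (auto simp: gen_def)
    also have "\<dots> = (if Node u \<in> Ks ! i then real k - 1 else 0)"
    proof (cases "Node u \<in> Ks ! i")
      case True
      have "(\<Sum>w\<in>Ks ! i. if Node u \<in> Ks ! i \<and> w \<noteq> Node u then 1 else 0 :: real) =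
            (\<Sum>w\<in>Ks ! i - {Node u}. 1)"
        using fin True by (subst sum.remove[of _ "Node u"]) (auto intro!: sum.cong)
      also have "\<dots> = real k - 1" using True fin c k by (simp add: of_nat_diff)
      finally show ?thesis using True by simp
    qed simp
    finally show ?thesis using False by simp
  qed
qed

lemma avail_cnt:
  assumes g: "good k Ks" and k: "k \<ge> 1" and u: "1 \<le> u" "u \<le> length Ks"
  shows "(\<Sum>K\<in>avail k Ks. if Node u \<in> K then 1 else 0 :: real) =
    real k + (real k - 1) * real (length (filter (\<lambda>K. Node u \<in> K) Ks))"
proof -
  have "Node u \<notin> root_clique k" by (auto simp: root_clique_def)
  then have "(\<Sum>K\<in>avail k Ks. if Node u \<in> K then 1 else 0 :: real) =
     (\<Sum>i<length Ks. \<Sum>w\<in>Ks ! i. if Node u \<in> gen Ks i w then 1 else 0)"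
    using avail_sum[OF g, of "\<lambda>K. if Node u \<in> K then 1 else 0 :: real"] by simp
  also have "\<dots> = (\<Sum>i<length Ks. (if u = Suc i then real k else 0) + (if Node u \<in> Ks ! i then real k - 1 else 0))"
    by (rule sum.cong[OF refl], rule gen_cnt[OF g _ k], simp)
  also have "\<dots> = (\<Sum>i<length Ks. if u = Suc i then real k else 0) + (real k - 1) * real (length (filter (\<lambda>K. Node u \<in> K) Ks))"
    by (simp add: sum.distrib cnt_sum)
  also have "(\<Sum>i<length Ks. if u = Suc i then real k else 0) = real k"
  proof -
    have "(\<Sum>i<length Ks. if u = Suc i then real k else 0) = (\<Sum>i<length Ks. if i = u - 1 then real k else 0)"
      using u by (intro sum.cong) auto
    then show ?thesis using u by simp
  qed
  finally show ?thesis .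
qed

lemma avail_card:
  assumes g: "good k Ks"
  shows "(\<Sum>K\<in>avail k Ks. 1 :: real) = 1 + real k * real (length Ks)"
proof -
  have "(\<Sum>K\<in>avail k Ks. 1 :: real) = 1 + (\<Sum>i<length Ks. real (card (Ks ! i)))"
    using avail_sum[OF g, of "\<lambda>_. 1::real"] by simp
  also have "\<dots> = 1 + real k * real (length Ks)"
    using good_ok[OF g] unfolding cl_ok_def by simp
  finally show ?thesis .
qed

lemma step_sum:
  assumes g: "good k Ks" and k: "k \<ge> 1" and u: "1 \<le> u" "u \<le> length Ks"
    and d: "d = length (filter (\<lambda>K. Node u \<in> K) Ks)"
  shows "(\<Sum>K\<in>avail k Ks. (real (nchildren Ks K) + 1) * \<psi> (d + (if Node u \<in> K then 1 else 0))) =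
     (1 + (real k + 1) * real (length Ks) - real k * (real d + 1)) * \<psi> d + real k * (real d + 1) * \<psi> (Suc d)"
proof -
  define \<Delta> where "\<Delta> = \<psi> (Suc d) - \<psi> d"
  have h: "\<And>K. \<psi> (d + (if Node u \<in> K then 1 else 0)) = \<psi> d + (if Node u \<in> K then 1 else 0) * \<Delta>"
    unfolding \<Delta>_def by auto
  have fin: "finite (avail k Ks)" using avail_sum[OF g] by blast
  have S: "set Ks \<subseteq> avail k Ks" using set_sub_avail[OF g] .
  have "(\<Sum>K\<in>avail k Ks. (real (nchildren Ks K) + 1) * \<psi> (d + (if Node u \<in> K then 1 else 0))) =
     (\<Sum>K\<in>avail k Ks. real (nchildren Ks K) * (\<psi> d + (if Node u \<in> K then 1 else 0) * \<Delta>)) +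
     ((\<Sum>K\<in>avail k Ks. 1) * \<psi> d + (\<Sum>K\<in>avail k Ks. if Node u \<in> K then 1 else 0) * \<Delta>)"
    by (simp add: h algebra_simps sum.distrib sum_distrib_left sum_distrib_right)
  also have "(\<Sum>K\<in>avail k Ks. real (nchildren Ks K) * (\<psi> d + (if Node u \<in> K then 1 else 0) * \<Delta>)) =
       (\<Sum>j<length Ks. (\<psi> d + (if Node u \<in> Ks ! j then 1 else 0) * \<Delta>))"
    by (rule nch_sum[OF fin S])
  also have "\<dots> = real (length Ks) * \<psi> d + real d * \<Delta>"
    using cnt_sum[where xs=Ks and P="\<lambda>K. Node u \<in> K" and c=1] d
    by (simp add: sum.distrib sum_distrib_right[symmetric])
  finally show ?thesis
    using avail_cnt[OF g k u] avail_card[OF g] d unfolding \<Delta>_def by (simp add: algebra_simps)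
qed

lemma trees_Suc_image: "trees k (Suc n) = (\<lambda>(t,K,p). t @ [(K,p)]) `
   (SIGMA t:trees k n. SIGMA K:avail k (map fst t). {..nchildren (map fst t) K})"
  by (auto simp: image_iff)

lemma finite_avail_t: "t \<in> trees k n \<Longrightarrow> finite (avail k (map fst t))"
  using avail_sum trees_props by blast

lemma finite_trees: "finite (trees k n)"
proof (induction n)
  case 0 then show ?case by simp
next
  case (Suc n)
  show ?case unfolding trees_Suc_image
    by (intro finite_imageI finite_SigmaI Suc finite_avail_t) auto
qed

lemma trees_sum: "(\<Sum>t\<in>trees k (Suc n). F t) =
   (\<Sum>t\<in>trees k n. \<Sum>K\<in>avail k (map fst t). \<Sum>p\<le>nchildren (map fst t) K. F (t @ [(K,p)]))"
proof -
  have inj: "inj_on (\<lambda>(t,K,p). t @ [(K,p)])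
     (SIGMA t:trees k n. SIGMA K:avail k (map fst t). {..nchildren (map fst t) K})"
    by (auto simp: inj_on_def)
  have "(\<Sum>t\<in>trees k (Suc n). F t) =
     (\<Sum>x\<in>(SIGMA t:trees k n. SIGMA K:avail k (map fst t). {..nchildren (map fst t) K}).
        F (case x of (t,K,p) \<Rightarrow> t @ [(K,p)]))"
    unfolding trees_Suc_image by (subst sum.reindex[OF inj]) (simp add: case_prod_beta)
  also have "\<dots> = (\<Sum>t\<in>trees k n. \<Sum>x\<in>(SIGMA K:avail k (map fst t). {..nchildren (map fst t) K}).
        F (case x of (K,p) \<Rightarrow> t @ [(K,p)]))"
    by (subst sum.Sigma) (auto simp: finite_trees finite_avail_t intro!: sum.cong)
  also have "\<dots> = (\<Sum>t\<in>trees k n. \<Sum>K\<in>avail k (map fst t). \<Sum>p\<le>nchildren (map fst t) K. F (t @ [(K,p)]))"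
    by (intro sum.cong refl, subst sum.Sigma) (auto simp: finite_avail_t intro!: sum.cong)
  finally show ?thesis .
qed

lemma outdeg_alt: "outdeg t u = length (filter (\<lambda>K. Node u \<in> K) (map fst t))"
  unfolding outdeg_def length_filter_conv_card by (rule arg_cong[where f=card]) auto

definition H :: "nat \<Rightarrow> nat \<Rightarrow> (nat \<Rightarrow> real) \<Rightarrow> real" where
  "H k n \<psi> = (\<Sum>t\<in>trees k n. \<Sum>u\<in>{1..n}. \<psi> (outdeg t u))"

lemma W_sum:
  assumes "t \<in> trees k n"
  shows "(\<Sum>K\<in>avail k (map fst t). real (nchildren (map fst t) K) + 1) = 1 + (real k + 1) * real n"
proof -
  have g: "good k (map fst t)" and l: "length t = n" using trees_props[OF assms] by auto
  have "(\<Sum>K\<in>avail k (map fst t). real (nchildren (map fst t) K) + 1) =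
      (\<Sum>K\<in>avail k (map fst t). real (nchildren (map fst t) K) * 1) + (\<Sum>K\<in>avail k (map fst t). 1)"
    by (simp add: sum.distrib)
  also have "\<dots> = real n + (1 + real k * real n)"
    using nch_sum[OF finite_avail_t[OF assms] set_sub_avail[OF g], of "\<lambda>_. 1"] avail_card[OF g] l by simp
  finally show ?thesis by (simp add: algebra_simps)
qed

lemma card_trees_Suc: "real (card (trees k (Suc n))) = (1 + (real k + 1) * real n) * real (card (trees k n))"
proof -
  have "real (card (trees k (Suc n))) = (\<Sum>t\<in>trees k (Suc n). 1)" by simp
  also have "\<dots> = (\<Sum>t\<in>trees k n. \<Sum>K\<in>avail k (map fst t). real (nchildren (map fst t) K) + 1)"
    unfolding trees_sum by (simp add: add.commute)
  also have "\<dots> = (\<Sum>t\<in>trees k n. 1 + (real k + 1) * real n)" using W_sum by (intro sum.cong) auto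
  finally show ?thesis by simp
qed

lemma H_Suc:
  assumes k: "k \<ge> 1"
  shows "H k (Suc n) \<psi> = H k n (\<lambda>d. (1 + (real k + 1) * real n - real k * (real d + 1)) * \<psi> d
            + real k * (real d + 1) * \<psi> (Suc d))
          + (1 + (real k + 1) * real n) * \<psi> 0 * real (card (trees k n))"
proof -
  define W where "W = 1 + (real k + 1) * real n"
  have per_t: "(\<Sum>K\<in>avail k (map fst t). \<Sum>p\<le>nchildren (map fst t) K. \<Sum>u\<in>{1..Suc n}. \<psi> (outdeg (t @ [(K,p)]) u))
      = (\<Sum>u\<in>{1..n}. (W - real k * (real (outdeg t u) + 1)) * \<psi> (outdeg t u)
            + real k * (real (outdeg t u) + 1) * \<psi> (Suc (outdeg t u))) + W * \<psi> 0"
    if t: "t \<in> trees k n" for t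
  proof -
    let ?Ks = "map fst t"
    have g: "good k ?Ks" and l: "length t = n" using trees_props[OF t] by auto
    have od: "outdeg (t @ [(K,p)]) u = outdeg t u + (if Node u \<in> K then 1 else 0)" for K p u
      unfolding outdeg_alt by simp
    have od0: "outdeg (t @ [(K,p)]) (Suc n) = 0" if K: "K \<in> avail k ?Ks" for K p
    proof -
      have "cl_ok k (length ?Ks) K" using good_avail_ok[OF g K] .
      then have "Node (Suc n) \<notin> K" using l unfolding cl_ok_def by fastforce
      moreover have "\<forall>K'\<in>set ?Ks. Node (Suc n) \<notin> K'"
      proof
        fix K' assume "K' \<in> set ?Ks"
        then obtain i where i: "i < length ?Ks" "K' = ?Ks ! i" by (auto simp: in_set_conv_nth)
        then have "cl_ok k i K'" using good_ok[OF g] by simp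
        then show "Node (Suc n) \<notin> K'" using i l unfolding cl_ok_def by fastforce
      qed
      ultimately show ?thesis unfolding outdeg_alt by (simp add: filter_empty_conv)
    qed
    have "(\<Sum>K\<in>avail k ?Ks. \<Sum>p\<le>nchildren ?Ks K. \<Sum>u\<in>{1..Suc n}. \<psi> (outdeg (t @ [(K,p)]) u))
       = (\<Sum>K\<in>avail k ?Ks. \<Sum>p\<le>nchildren ?Ks K. \<psi> 0 + (\<Sum>u\<in>{1..n}. \<psi> (outdeg t u + (if Node u \<in> K then 1 else 0))))"
    proof (intro sum.cong refl)
      fix K p assume K: "K \<in> avail k ?Ks"
      have "(\<Sum>u\<in>{1..Suc n}. \<psi> (outdeg (t @ [(K,p)]) u)) =
          \<psi> (outdeg (t @ [(K,p)]) (Suc n)) + (\<Sum>u\<in>{1..n}. \<psi> (outdeg (t @ [(K,p)]) u))"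
        by (simp add: atLeastAtMostSuc_conv)
      also have "\<dots> = \<psi> 0 + (\<Sum>u\<in>{1..n}. \<psi> (outdeg t u + (if Node u \<in> K then 1 else 0)))"
        unfolding od0[OF K] by (simp only: od)
      finally show "(\<Sum>u\<in>{1..Suc n}. \<psi> (outdeg (t @ [(K,p)]) u)) =
          \<psi> 0 + (\<Sum>u\<in>{1..n}. \<psi> (outdeg t u + (if Node u \<in> K then 1 else 0)))" .
    qed
    also have "\<dots> = (\<Sum>K\<in>avail k ?Ks. (real (nchildren ?Ks K) + 1) * \<psi> 0) +
        (\<Sum>u\<in>{1..n}. \<Sum>K\<in>avail k ?Ks. (real (nchildren ?Ks K) + 1) * \<psi> (outdeg t u + (if Node u \<in> K then 1 else 0)))"
      by (simp add: sum.distrib sum_distrib_left algebra_simps) (simp add: sum.swap[of _ "avail k (map fst t)"])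
    also have "(\<Sum>K\<in>avail k ?Ks. (real (nchildren ?Ks K) + 1) * \<psi> 0) = W * \<psi> 0"
      using W_sum[OF t] unfolding W_def by (simp add: sum_distrib_right[symmetric])
    also have "(\<Sum>u\<in>{1..n}. \<Sum>K\<in>avail k ?Ks. (real (nchildren ?Ks K) + 1) * \<psi> (outdeg t u + (if Node u \<in> K then 1 else 0)))
       = (\<Sum>u\<in>{1..n}. (W - real k * (real (outdeg t u) + 1)) * \<psi> (outdeg t u)
            + real k * (real (outdeg t u) + 1) * \<psi> (Suc (outdeg t u)))"
      by (intro sum.cong refl, subst step_sum[OF g k]) (auto simp: l W_def outdeg_alt)
    finally show ?thesis by simp
  qed
  have "H k (Suc n) \<psi> = (\<Sum>t\<in>trees k n. (\<Sum>u\<in>{1..n}. (W - real k * (real (outdeg t u) + 1)) * \<psi> (outdeg t u)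
            + real k * (real (outdeg t u) + 1) * \<psi> (Suc (outdeg t u))) + W * \<psi> 0)"
    unfolding H_def trees_sum by (intro sum.cong refl per_t)
  also have "\<dots> = H k n (\<lambda>d. (W - real k * (real d + 1)) * \<psi> d + real k * (real d + 1) * \<psi> (Suc d))
      + W * \<psi> 0 * real (card (trees k n))"
    unfolding H_def by (simp add: sum.distrib)
  finally show ?thesis unfolding W_def .
qed


lemma card_trees: "real (card (trees k n)) = (\<Prod>i<n. 1 + (real k + 1) * real i)"
proof (induction n)
  case (Suc n) then show ?case by (simp only: card_trees_Suc) (simp add: mult.commute)
qed simp

lemma H_scale: "H k n (\<lambda>d. c * \<psi> d) = c * H k n \<psi>"
  unfolding H_def by (simp add: sum_distrib_left)

lemma H_sum: "finite A \<Longrightarrow> H k n (\<lambda>d. \<Sum>l\<in>A. f l d) = (\<Sum>l\<in>A. H k n (f l))"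
  unfolding H_def by (simp add: sum.swap[of _ A])


definition phi :: "nat \<Rightarrow> nat \<Rightarrow> real" where
  "phi l d = real (l choose d) * (-1) ^ d"

lemma choose_step_nat: "Suc d * (l choose Suc d) = (l - d) * (l choose d)"
proof (cases l)
  case 0 then show ?thesis by (cases d) auto
next
  case (Suc l')
  then show ?thesis using Suc_times_binomial[of d l'] binomial_absorb_comp[of l d] by simp
qed

lemma choose_step: "(real d + 1) * real (l choose Suc d) = (real l - real d) * real (l choose d)"
proof (cases "d \<le> l")
  case True
  then show ?thesis using arg_cong[OF choose_step_nat[of d l], of real] by (simp add: of_nat_diff algebra_simps)
next
  case False
  then show ?thesis by (simp add: binomial_eq_0 not_le)
qed

lemma phi_eigen: "(W - real k * (real d + 1)) * phi l d + real k * (real d + 1) * phi l (Suc d)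
   = (W - real k * (real l + 1)) * phi l d"
proof -
  have "real k * (real d + 1) * phi l (Suc d) = - real k * ((real d + 1) * real (l choose Suc d)) * (-1)^d"
    unfolding phi_def by simp
  also have "\<dots> = - real k * (real l - real d) * phi l d" unfolding choose_step phi_def by simp
  finally show ?thesis by (simp add: algebra_simps)
qed

lemma phi0: "phi l 0 = 1" by (simp add: phi_def)

definition Tp :: "nat \<Rightarrow> nat \<Rightarrow> real" where "Tp k n = (\<Prod>i<n. 1 + (real k + 1) * real i)"
definition Qp :: "nat \<Rightarrow> nat \<Rightarrow> nat \<Rightarrow> real" where
  "Qp k l n = (\<Prod>i<n. (real k + 1) * (real i + 1) - real k * (real l + 2))"

lemma c_closed:
  assumes k: "k \<ge> 1"
  shows "H k n (phi l) = (Tp k (Suc n) - Qp k l n) / (real k * (real l + 2) + 1)"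
proof (induction n)
  case 0
  then show ?case by (simp add: H_def Tp_def Qp_def)
next
  case (Suc n)
  have "H k (Suc n) (phi l) = (1 + (real k + 1) * real n - real k * (real l + 1)) * H k n (phi l)
     + (1 + (real k + 1) * real n) * real (card (trees k n))"
    unfolding H_Suc[OF k] phi_eigen H_scale phi0 by simp
  also have "\<dots> = (Tp k (Suc (Suc n)) - Qp k l (Suc n)) / (real k * (real l + 2) + 1)"
  proof -
    define T where "T = Tp k (Suc n)"
    define Q where "Q = Qp k l n"
    have cT: "(1 + (real k + 1) * real n) * real (card (trees k n)) = T"
      unfolding T_def Tp_def card_trees by (simp add: mult.commute)
    have T2: "Tp k (Suc (Suc n)) = T * (1 + (real k + 1) * (real n + 1))"
      unfolding T_def Tp_def by simp
    have Q2: "Qp k l (Suc n) = Q * ((real k + 1) * (real n + 1) - real k * (real l + 2))"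
      unfolding Q_def Qp_def by simp
    have D: "real k * (real l + 2) + 1 \<noteq> 0" by (metis add_nonneg_pos mult_nonneg_nonneg of_nat_0_le_iff zero_less_one less_irrefl add_nonneg_nonneg zero_le_numeral)
    show ?thesis unfolding Suc cT T2 Q2 T_def[symmetric] Q_def[symmetric]
      using D by (simp add: field_simps)
  qed
  finally show ?case .
qed

lemma inversion: "(if d = m then 1 else 0) = (\<Sum>l=0..m. real (m choose l) * (-1) ^ l * phi l d)"
proof (cases "d \<le> m")
  case False
  then show ?thesis by (auto simp: phi_def intro!: sum.neutral)
next
  case True
  have "(\<Sum>l=0..m. real (m choose l) * (-1) ^ l * phi l d) =
        (\<Sum>l=d..m. real (m choose l) * (-1) ^ l * phi l d)"
    using True by (intro sum.mono_neutral_right) (auto simp: phi_def)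
  also have "\<dots> = (\<Sum>j=0..m-d. real (m choose (j + d)) * (-1) ^ (j + d) * phi (j + d) d)"
    using sum.shift_bounds_cl_nat_ivl[of "\<lambda>l. real (m choose l) * (-1) ^ l * phi l d" 0 d "m - d"] True
    by simp
  also have "\<dots> = (\<Sum>j=0..m-d. real (m choose d) * ((-1) ^ j * real ((m - d) choose j)))"
  proof (intro sum.cong refl)
    fix j assume j: "j \<in> {0..m-d}"
    have "(m choose (j + d)) * ((j + d) choose d) = (m choose d) * ((m - d) choose j)"
      using choose_mult[of d "j+d" m] j True by simp
    then have "real (m choose (j + d)) * real ((j + d) choose d) = real (m choose d) * real ((m - d) choose j)"
      by (metis of_nat_mult)
    then show "real (m choose (j + d)) * (-1) ^ (j + d) * phi (j + d) d =
        real (m choose d) * ((-1) ^ j * real ((m - d) choose j))"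
      unfolding phi_def by (simp add: power_add algebra_simps)
  qed
  also have "\<dots> = real (m choose d) * (\<Sum>j\<le>m-d. (-1) ^ j * real ((m - d) choose j))"
    by (simp add: sum_distrib_left atLeast0AtMost)
  also have "\<dots> = (if d = m then 1 else 0)"
    using choose_alternating_sum[of "m - d", where 'a=real] True by auto
  finally show ?thesis by simp
qed

lemma gch_prod: "((real n + x) gchoose n) * (fact n * (real k + 1) ^ n) = (\<Prod>i<n. (real k + 1) * (x + 1 + real i))"
proof -
  have "(real n + x) gchoose n = pochhammer (x + 1) n / fact n"
    by (simp add: gbinomial_pochhammer')
  moreover have "pochhammer (x + 1) n = (\<Prod>i<n. x + 1 + real i)"
    by (simp add: pochhammer_prod atLeast0LessThan)
  ultimately show ?thesis by (simp add: prod.distrib)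
qed


lemma Tp_pos: "Tp k n > 0"
  unfolding Tp_def by (intro prod_pos) (simp add: add_pos_nonneg)

lemma Ybar_H:
  assumes n: "n \<ge> 1"
  shows "Ybar_prob k n m = H k n (\<lambda>d. if d = m then 1 else 0) / (Tp k n * real n)"
proof -
  let ?S = "trees k n \<times> {1..n}"
  have "real (card (trees k n)) > 0" using Tp_pos[of k n] card_trees[of k n] unfolding Tp_def by auto
  then have ne: "trees k n \<noteq> {}" by (metis card.empty of_nat_0 less_irrefl)
  have fin: "finite ?S" using finite_trees by auto
  have S: "?S \<noteq> {}" using ne n by auto
  have "real (card (?S \<inter> {x. outdeg (fst x) (snd x) = m})) =
        (\<Sum>x\<in>?S. if outdeg (fst x) (snd x) = m then 1 else 0)"
  proof -
    have "?S \<inter> {x. outdeg (fst x) (snd x) = m} = {x\<in>?S. outdeg (fst x) (snd x) = m}" by auto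
    then show ?thesis using fin by (simp add: sum.inter_filter[symmetric])
  qed
  also have "\<dots> = H k n (\<lambda>d. if d = m then 1 else 0)"
    unfolding H_def by (subst sum.cartesian_product) (simp add: case_prod_beta)
  finally have c: "real (card (?S \<inter> {x. outdeg (fst x) (snd x) = m})) = H k n (\<lambda>d. if d = m then 1 else 0)" .
  have cs: "real (card ?S) = Tp k n * real n" using card_trees[of k n] unfolding Tp_def
    by (simp add: card_cartesian_product)
  show ?thesis unfolding Ybar_prob_def measure_pmf_of_set[OF S fin] c cs ..
qed

lemma H_delta:
  assumes k: "k \<ge> 1"
  shows "H k n (\<lambda>d. if d = m then 1 else 0) =
    (\<Sum>l=0..m. real (m choose l) * (-1) ^ l * ((Tp k (Suc n) - Qp k l n) / (real k * (real l + 2) + 1)))"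
proof -
  have "H k n (\<lambda>d. if d = m then 1 else 0) = H k n (\<lambda>d. \<Sum>l=0..m. real (m choose l) * (-1) ^ l * phi l d)"
    unfolding inversion ..
  also have "\<dots> = (\<Sum>l=0..m. H k n (\<lambda>d. real (m choose l) * (-1) ^ l * phi l d))"
    by (rule H_sum) simp
  also have "\<dots> = (\<Sum>l=0..m. real (m choose l) * (-1) ^ l * H k n (phi l))"
    by (simp add: H_scale)
  finally show ?thesis by (simp add: c_closed[OF k])
qed

lemma kpos: "real k + 1 \<noteq> 0" by (simp add: add_nonneg_pos)

lemma G0: "(real n - real k / (real k + 1)) gchoose n = Tp k n / (fact n * (real k + 1) ^ n)"
proof -
  have "((real n + (- (real k / (real k + 1)))) gchoose n) * (fact n * (real k + 1) ^ n) = Tp k n"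
    unfolding gch_prod Tp_def using kpos by (intro prod.cong refl) (simp add: field_simps)
  then show ?thesis using kpos by (simp add: field_simps)
qed

lemma G1: "(real n + 1 / (real k + 1)) gchoose n = Tp k (Suc n) / (fact n * (real k + 1) ^ n)"
proof -
  have "((real n + 1 / (real k + 1)) gchoose n) * (fact n * (real k + 1) ^ n) = Tp k (Suc n)"
    unfolding gch_prod Tp_def prod.lessThan_Suc_shift using kpos
    by (simp, intro prod.cong refl) (simp add: field_simps)
  then show ?thesis using kpos by (simp add: field_simps)
qed

lemma G2: "(real n - real k * (real l + 2) / (real k + 1)) gchoose n = Qp k l n / (fact n * (real k + 1) ^ n)"
proof -
  have "((real n + (- (real k * (real l + 2) / (real k + 1)))) gchoose n) * (fact n * (real k + 1) ^ n) = Qp k l n"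
    unfolding gch_prod Qp_def using kpos by (intro prod.cong refl) (simp add: field_simps)
  then show ?thesis using kpos by (simp add: field_simps)
qed

lemma part1:
  assumes k: "k \<ge> 1" and n: "n \<ge> 1"
  shows "Ybar_prob k n m =
              1 / (real n * ((real n - real k / (real k + 1)) gchoose n)) *
              (\<Sum>l=0..m. real (m choose l) * (-1) ^ l / (real k * (real l + 2) + 1) *
                 (((real n + 1 / (real k + 1)) gchoose n)
                  - ((real n - real k * (real l + 2) / (real k + 1)) gchoose n)))"
proof -
  define \<alpha> where "\<alpha> = fact n * (real k + 1) ^ n"
  have a: "\<alpha> \<noteq> 0" unfolding \<alpha>_def using kpos by simp
  have T: "Tp k n \<noteq> 0" using Tp_pos[of k n] by simp
  have "(\<Sum>l=0..m. real (m choose l) * (-1) ^ l / (real k * (real l + 2) + 1) *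
                 (((real n + 1 / (real k + 1)) gchoose n)
                  - ((real n - real k * (real l + 2) / (real k + 1)) gchoose n)))
     = (\<Sum>l=0..m. real (m choose l) * (-1) ^ l * ((Tp k (Suc n) - Qp k l n) / (real k * (real l + 2) + 1))) / \<alpha>"
    unfolding G1 G2 \<alpha>_def[symmetric] sum_divide_distrib
    by (intro sum.cong refl) (simp add: diff_divide_distrib[symmetric] mult.assoc)
  then show ?thesis
    unfolding Ybar_H[OF n] H_delta[OF k] G0 \<alpha>_def[symmetric] using a T n
    by (simp add: field_simps)
qed


lemma alg1: "(P::real) > 0 \<Longrightarrow> F > 0 \<Longrightarrow> k > 0 \<Longrightarrow> (m::real) \<ge> 0 \<Longrightarrow>
  (k+1)/(k*(m+1)*(P/((m+1)*F))) = (k+1)/k*F/P"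
proof -
  assume a: "P > 0" "F > 0" "k > 0" "m \<ge> 0"
  then show ?thesis by (simp add: divide_simps)
qed

lemma alg2: "(P::real) > 0 \<Longrightarrow> b \<ge> 0 \<Longrightarrow> (m::real) \<ge> 0 \<Longrightarrow>
   (1+b)*F/(P*(2+b+m)) = F/P - (m+1)*F/(P*(2+b+m))"
proof -
  assume a: "P > 0" "b \<ge> 0" "m \<ge> 0"
  then show ?thesis by (simp add: divide_simps) (simp add: algebra_simps)
qed

lemma p_poch:
  assumes k: "k \<ge> 1"
  shows "p_lim k m = (real k + 1) / real k * fact m / pochhammer (2 + 1 / real k) (Suc m)"
proof -
  have e: "real m + 2 + 1 / real k - real (Suc m) + 1 = 2 + 1 / real k" by simp
  have "(real m + 2 + 1 / real k) gchoose (m + 1) = pochhammer (2 + 1 / real k) (Suc m) / fact (Suc m)"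
    unfolding gbinomial_pochhammer' by (simp only: Suc_eq_plus1[symmetric] e)
  moreover have "pochhammer (2 + 1 / real k) (Suc m) > 0" by (intro pochhammer_pos) (simp add: add_pos_nonneg)
  moreover have "real k > 0" using k by simp
  ultimately show ?thesis unfolding p_lim_def fact_Suc
    using alg1[of "pochhammer (2 + 1 / real k) (Suc m)" "fact m" "real k" "real m"]
    by (simp add: mult.commute)
qed

lemma p_nonneg: "k \<ge> 1 \<Longrightarrow> p_lim k m \<ge> 0"
  unfolding p_poch
  by (intro divide_nonneg_pos mult_nonneg_nonneg pochhammer_pos) (auto simp: add_pos_nonneg)

definition Rr :: "nat \<Rightarrow> nat \<Rightarrow> real" where
  "Rr k m = fact m / pochhammer (2 + 1 / real k) m"

lemma Rr_tele:
  assumes k: "k \<ge> 1"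
  shows "p_lim k m = Rr k m - Rr k (Suc m)"
proof -
  define P where "P = pochhammer (2 + 1 / real k) m"
  have P: "P > 0" unfolding P_def by (intro pochhammer_pos) (simp add: add_pos_nonneg)
  have kp: "real k > 0" using k by simp
  have "pochhammer (2 + 1 / real k) (Suc m) = P * (2 + 1 / real k + real m)"
    unfolding P_def pochhammer_Suc ..
  moreover have "(real k + 1) / real k = 1 + 1 / real k" using kp by (simp add: field_simps)
  ultimately show ?thesis unfolding p_poch[OF k] Rr_def P_def[symmetric] fact_Suc
    using alg2[OF P, of "1 / real k" "real m" "fact m"] by (simp add: add.commute add.left_commute)
qed

lemma Rr_bound: "k \<ge> 1 \<Longrightarrow> 0 \<le> Rr k m \<and> Rr k m \<le> inverse (real (Suc m))"
proof (induction m)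
  case 0 then show ?case by (simp add: Rr_def)
next
  case (Suc m)
  define P where "P = pochhammer (2 + 1 / real k) m"
  have P: "P > 0" unfolding P_def by (intro pochhammer_pos) (simp add: add_pos_nonneg)
  have kp: "1 / real k \<ge> 0" by simp
  have eq: "Rr k (Suc m) = Rr k m * (real m + 1) / (2 + 1 / real k + real m)"
    unfolding Rr_def pochhammer_Suc P_def[symmetric] using P kp
    by (simp add: field_simps)
  have d: "2 + 1 / real k + real m > 0" using kp by linarith
  have "Rr k (Suc m) \<le> inverse (real (Suc m)) * (real m + 1) / (2 + 1 / real k + real m)"
    unfolding eq using Suc d by (intro divide_right_mono mult_right_mono) auto
  also have "\<dots> = 1 / (2 + 1 / real k + real m)" by (simp add: field_simps)
  also have "\<dots> \<le> inverse (real (Suc (Suc m)))" using kp d by (simp add: field_simps)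
  finally show ?case using Suc eq d by simp
qed

lemma part3:
  assumes k: "k \<ge> 1"
  shows "p_lim k sums 1"
proof -
  have "Rr k \<longlonglongrightarrow> 0"
    by (rule tendsto_sandwich[OF _ _ tendsto_const LIMSEQ_inverse_real_of_nat])
       (use Rr_bound[OF k] in auto)
  from telescope_sums'[OF this] show ?thesis
    unfolding Rr_tele[OF k, symmetric] by (simp add: Rr_def)
qed

lemma beta_sum:
  fixes c :: real
  assumes "c > 0"
  shows "(\<Sum>l\<le>m. real (m choose l) * (-1) ^ l / (real l + c)) = fact m / pochhammer c (Suc m)"
  using assms
proof (induction m arbitrary: c)
  case 0 then show ?case by simp
next
  case (Suc m)
  define g where "g = (\<lambda>c l. real (m choose l) * (-1) ^ l / (real l + c))"
  have A: "(\<Sum>l\<le>m. g c l) = 1 / c + (\<Sum>i\<le>m. g c (Suc i))"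
  proof -
    have "(\<Sum>l\<le>m. g c l) = (\<Sum>l\<le>Suc m. g c l)" by (simp add: g_def)
    also have "\<dots> = g c 0 + (\<Sum>i\<le>m. g c (Suc i))" by (rule sum.atMost_Suc_shift)
    finally show ?thesis by (simp add: g_def)
  qed
  have "(\<Sum>l\<le>Suc m. real (Suc m choose l) * (-1) ^ l / (real l + c)) =
     1 / c + (\<Sum>i\<le>m. real (Suc m choose Suc i) * (-1) ^ Suc i / (real (Suc i) + c))"
    by (subst sum.atMost_Suc_shift) simp
  also have "(\<Sum>i\<le>m. real (Suc m choose Suc i) * (-1) ^ Suc i / (real (Suc i) + c)) =
      (\<Sum>i\<le>m. g c (Suc i)) - (\<Sum>i\<le>m. g (c + 1) i)"
    unfolding sum_subtractf[symmetric] g_def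
  proof (intro sum.cong refl)
    fix i
    have den: "real (Suc i) + c = real i + (c + 1)" by simp
    have "real (Suc m choose Suc i) * (-1) ^ Suc i / (real (Suc i) + c) =
      - (real (m choose i) * (-1) ^ i / (real i + (c + 1))) - real (m choose Suc i) * (-1) ^ i / (real (Suc i) + c)"
      unfolding binomial_Suc_Suc of_nat_add power_Suc den by (simp add: add_divide_distrib[symmetric] algebra_simps)
    then show "real (Suc m choose Suc i) * (-1) ^ Suc i / (real (Suc i) + c) =
      real (m choose Suc i) * (-1) ^ Suc i / (real (Suc i) + c) - real (m choose i) * (-1) ^ i / (real i + (c + 1))"
      by simp
  qed
  finally have S: "(\<Sum>l\<le>Suc m. real (Suc m choose l) * (-1) ^ l / (real l + c)) =
       (\<Sum>l\<le>m. g c l) - (\<Sum>i\<le>m. g (c + 1) i)" using A by simp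
  have c1: "c + 1 > 0" using Suc.prems by simp
  have IH1: "(\<Sum>l\<le>m. g c l) = fact m / pochhammer c (Suc m)" unfolding g_def using Suc by simp
  have IH2: "(\<Sum>l\<le>m. g (c + 1) l) = fact m / pochhammer (c + 1) (Suc m)"
    unfolding g_def using Suc.IH[OF c1] by simp
  define P1 where "P1 = pochhammer c (Suc m)"
  define P2 where "P2 = pochhammer (c + 1) (Suc m)"
  have p1: "pochhammer c (Suc (Suc m)) = c * P2" unfolding P2_def by (rule pochhammer_rec)
  have p2: "pochhammer c (Suc (Suc m)) = P1 * (c + real (Suc m))" unfolding P1_def by (rule pochhammer_Suc)
  have P1: "P1 > 0" unfolding P1_def using Suc.prems by (rule pochhammer_pos)
  have P2: "P2 > 0" unfolding P2_def using c1 by (rule pochhammer_pos)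
  have "fact m / P1 - fact m / P2 = fact (Suc m) / pochhammer c (Suc (Suc m))"
  proof -
    have "fact m / P1 = fact m * (c + real (Suc m)) / pochhammer c (Suc (Suc m))"
    proof -
      have "c + real (Suc m) \<noteq> 0" using Suc.prems by simp
      then show ?thesis unfolding p2 using P1 Suc.prems by (simp add: divide_simps)
    qed
    moreover have "fact m / P2 = fact m * c / pochhammer c (Suc (Suc m))"
      unfolding p1 using P2 Suc.prems by (simp add: field_simps)
    ultimately show ?thesis by (simp add: diff_divide_distrib[symmetric] algebra_simps)
  qed
  then show ?case unfolding S IH1 IH2 P1_def P2_def .
qed


lemma Ybar_alt:
  assumes k: "k \<ge> 1" and n: "n \<ge> 1"
  shows "Ybar_prob k n m = (\<Sum>l=0..m. real (m choose l) * (-1) ^ l / (real k * (real l + 2) + 1) *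
      (Tp k (Suc n) / (Tp k n * real n) - Qp k l n / (Tp k n * real n)))"
  unfolding Ybar_H[OF n] H_delta[OF k] sum_divide_distrib
  by (intro sum.cong refl) (simp add: diff_divide_distrib[symmetric])

lemma lim1: "(\<lambda>n. Tp k (Suc n) / (Tp k n * real n)) \<longlonglongrightarrow> real k + 1"
proof -
  have "(\<lambda>n. (real k + 1) + 1 / real n) \<longlonglongrightarrow> real k + 1 + 0"
    by (intro tendsto_intros)
  moreover have "eventually (\<lambda>n. (real k + 1) + 1 / real n = Tp k (Suc n) / (Tp k n * real n)) sequentially"
  proof (rule eventually_sequentiallyI[of 1])
    fix n :: nat assume n: "n \<ge> 1"
    have T: "Tp k n > 0" by (rule Tp_pos)
    have "Tp k (Suc n) = Tp k n * (1 + (real k + 1) * real n)" unfolding Tp_def by simp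
    then show "(real k + 1) + 1 / real n = Tp k (Suc n) / (Tp k n * real n)"
      using T n by (simp add: divide_simps)
  qed
  ultimately show ?thesis by (simp add: Lim_transform_eventually)
qed

lemma lim2:
  assumes k: "k \<ge> 1"
  shows "(\<lambda>n. Qp k l n / (Tp k n * real n)) \<longlonglongrightarrow> 0"
proof -
  define a where "a = (\<lambda>i::nat. ((real k + 1) * (real i + 1) - real k * (real l + 2)) / (1 + (real k + 1) * real i))"
  define N where "N = Suc l"
  define B where "B = (\<Prod>i<N. \<bar>a i\<bar>)"
  have QT: "Qp k l n / Tp k n = (\<Prod>i<n. a i)" for n
    unfolding Qp_def Tp_def a_def by (simp add: prod_dividef)
  have a1: "0 \<le> a i \<and> a i \<le> 1" if "i \<ge> N" for i
  proof -
    have den: "1 + (real k + 1) * real i > 0" by (simp add: add_pos_nonneg)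
    have il: "real i \<ge> real l + 1" using that unfolding N_def by simp
    have "real k * (real l + 1) \<le> real k * real i" using il by (intro mult_left_mono) auto
    then have num0: "(real k + 1) * (real i + 1) - real k * (real l + 2) \<ge> 0"
      by (simp add: algebra_simps)
    have num1: "(real k + 1) * (real i + 1) - real k * (real l + 2) \<le> 1 + (real k + 1) * real i"
      by (simp add: algebra_simps)
    show ?thesis unfolding a_def using den num0 num1 by (simp add: divide_simps)
  qed
  have bnd: "norm (Qp k l n / (Tp k n * real n)) \<le> B / real n" if n: "n \<ge> N" for n
  proof -
    have U: "{..<n} = {..<N} \<union> {N..<n}" using n by auto
    have "(\<Prod>i<n. \<bar>a i\<bar>) = B * (\<Prod>i\<in>{N..<n}. \<bar>a i\<bar>)"
      unfolding B_def by (simp only: U, subst prod.union_disjoint) auto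
    also have "\<dots> \<le> B * 1"
      by (intro mult_left_mono prod_le_1) (use a1 in \<open>auto simp: B_def prod_nonneg\<close>)
    finally have "\<bar>Qp k l n / Tp k n\<bar> \<le> B" unfolding QT by (simp add: abs_prod)
    then have "\<bar>Qp k l n / Tp k n\<bar> / real n \<le> B / real n" by (rule divide_right_mono) simp
    then show ?thesis by (simp add: abs_mult)
  qed
  show ?thesis
    by (rule Lim_null_comparison[OF eventually_sequentiallyI[of N] lim_const_over_n]) (use bnd in auto)
qed

lemma lim_identity:
  assumes k: "k \<ge> 1"
  shows "(\<Sum>l=0..m. real (m choose l) * (-1) ^ l / (real k * (real l + 2) + 1) * (real k + 1 - 0)) = p_lim k m"
proof -
  have kp: "real k > 0" using k by simp
  have "(\<Sum>l=0..m. real (m choose l) * (-1) ^ l / (real k * (real l + 2) + 1) * (real k + 1 - 0)) =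
        (real k + 1) / real k * (\<Sum>l\<le>m. real (m choose l) * (-1) ^ l / (real l + (2 + 1 / real k)))"
    unfolding sum_distrib_left atLeast0AtMost
  proof (intro sum.cong refl)
    fix l
    have "real k * (real l + 2) + 1 = real k * (real l + (2 + 1 / real k))" using kp by (simp add: field_simps)
    moreover have "real l + (2 + 1 / real k) > 0"
    proof -
      have "1 / real k \<ge> 0" "real l \<ge> 0" by simp_all
      then show ?thesis by linarith
    qed
    ultimately show "real (m choose l) * (-1) ^ l / (real k * (real l + 2) + 1) * (real k + 1 - 0) =
      (real k + 1) / real k * (real (m choose l) * (-1) ^ l / (real l + (2 + 1 / real k)))"
      using kp by (simp add: divide_simps)
  qed
  also have "\<dots> = p_lim k m"
  proof -
    have c: "(2::real) + 1 / real k > 0"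
    proof -
      have "1 / real k \<ge> 0" by simp
      then show ?thesis by linarith
    qed
    show ?thesis unfolding beta_sum[OF c] p_poch[OF k] by simp
  qed
  finally show ?thesis .
qed

lemma part4:
  assumes k: "k \<ge> 1"
  shows "(\<lambda>n. Ybar_prob k n m) \<longlonglongrightarrow> p_lim k m"
proof -
  have "(\<lambda>n. \<Sum>l=0..m. real (m choose l) * (-1) ^ l / (real k * (real l + 2) + 1) *
      (Tp k (Suc n) / (Tp k n * real n) - Qp k l n / (Tp k n * real n)))
     \<longlonglongrightarrow> (\<Sum>l=0..m. real (m choose l) * (-1) ^ l / (real k * (real l + 2) + 1) * (real k + 1 - 0))"
    by (intro tendsto_sum tendsto_mult tendsto_const tendsto_diff lim1 lim2[OF k])
  then have "(\<lambda>n. \<Sum>l=0..m. real (m choose l) * (-1) ^ l / (real k * (real l + 2) + 1) *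
      (Tp k (Suc n) / (Tp k n * real n) - Qp k l n / (Tp k n * real n))) \<longlonglongrightarrow> p_lim k m"
    unfolding lim_identity[OF k] .
  moreover have "eventually (\<lambda>n. (\<Sum>l=0..m. real (m choose l) * (-1) ^ l / (real k * (real l + 2) + 1) *
      (Tp k (Suc n) / (Tp k n * real n) - Qp k l n / (Tp k n * real n))) = Ybar_prob k n m) sequentially"
    by (rule eventually_sequentiallyI[of 1]) (simp add: Ybar_alt[OF k])
  ultimately show ?thesis by (rule Lim_transform_eventually)
qed

lemma part5:
  assumes k: "k \<ge> 1"
  shows "p_lim k \<sim>[at_top]
            (\<lambda>m. (real k + 1) / real k * Gamma (2 + 1 / real k) * real m powr (-2 - 1 / real k))"
proof (rule asymp_equivI')
  define z where "z = 2 + 1 / real k"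
  have kp: "real k > 0" using k by simp
  have z: "z > 0" unfolding z_def by (simp add: add_pos_nonneg)
  have G: "Gamma z > 0" using z by simp
  have "(\<lambda>m. Gamma_series z m / Gamma z) \<longlonglongrightarrow> Gamma z / Gamma z"
    by (intro tendsto_intros Gamma_series_LIMSEQ) (use G in simp)
  then have L: "(\<lambda>m. Gamma_series z m / Gamma z) \<longlonglongrightarrow> 1" using G by simp
  have ev: "eventually (\<lambda>m. Gamma_series z m / Gamma z =
      p_lim k m / ((real k + 1) / real k * Gamma (2 + 1 / real k) * real m powr (-2 - 1 / real k))) at_top"
  proof (rule eventually_sequentiallyI[of 1])
    fix m :: nat assume m: "m \<ge> 1"
    have mp: "real m > 0" using m by simp
    have P: "pochhammer z (Suc m) > 0" using z by (rule pochhammer_pos)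
    have e: "exp (z * ln (real m)) = real m powr z" using mp by (simp add: powr_def)
    have e2: "real m powr (-2 - 1 / real k) = inverse (real m powr z)"
      unfolding z_def powr_minus[symmetric] by simp
    have pz: "real m powr z > 0" using mp by simp
    show "Gamma_series z m / Gamma z =
      p_lim k m / ((real k + 1) / real k * Gamma (2 + 1 / real k) * real m powr (-2 - 1 / real k))"
      unfolding Gamma_series_def p_poch[OF k] z_def[symmetric] e2
      using e G P pz kp by (simp add: divide_simps)
  qed
  show "((\<lambda>m. p_lim k m / ((real k + 1) / real k * Gamma (2 + 1 / real k) * real m powr (-2 - 1 / real k))) \<longlongrightarrow> 1) at_top"
    using Lim_transform_eventually[OF L ev] .
qed

theorem theorem3:
  fixes k :: nat
  assumes "k \<ge> 1"
  shows "(\<forall>n m. n \<ge> 1 \<longrightarrow>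
            Ybar_prob k n m =
              1 / (real n * ((real n - real k / (real k + 1)) gchoose n)) *
              (\<Sum>l=0..m. real (m choose l) * (-1) ^ l / (real k * (real l + 2) + 1) *
                 (((real n + 1 / (real k + 1)) gchoose n)
                  - ((real n - real k * (real l + 2) / (real k + 1)) gchoose n))))
       \<and> (\<forall>m. p_lim k m \<ge> 0)
       \<and> (p_lim k sums 1)
       \<and> (\<forall>m. (\<lambda>n. Ybar_prob k n m) \<longlonglongrightarrow> p_lim k m)
       \<and> (p_lim k \<sim>[at_top]
            (\<lambda>m. (real k + 1) / real k * Gamma (2 + 1 / real k) * real m powr (-2 - 1 / real k)))"
  using part1[OF assms] p_nonneg[OF assms] part3[OF assms] part4[OF assms] part5[OF assms]
  by blast

end
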